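(* Let $k>1$, let $f$ be a positive function, differentiable on $[0,1]$, and define $g(R)=\dfrac{k-1}{\frac{k-1}{k}-R}$ for $R\neq \frac{k-1}{k}$. Consider the planar system $$\frac{dI}{d\tau}=I\,[f(R)(1-I-R)-k],\qquad \frac{dR}{d\tau}=(k-1)I-R.$$ A point $(I^*,R^* )$ is an endemic equilibrium of this system if and only if $R^*\in\left(0,\frac{k-1}{k}\right)$, $I^*\in\left(0,\frac1k\right)$, $I^*=\frac{1}{k-1}R^*$, and $f(R^* )=g(R^* )$.
   Context: An endemic equilibrium is an equilibrium point $(I^*,R^* )$ of the system with $I^*>0$. *)

theory Defs
  imports "HOL-Analysis.Analysis"
begin

definition g_fun :: "real \<Rightarrow> real \<Rightarrow> real" where
  "g_fun k R = (k - 1) / ((k - 1) / k - R)"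

definition dI :: "(real \<Rightarrow> real) \<Rightarrow> real \<Rightarrow> real \<Rightarrow> real \<Rightarrow> real" where
  "dI f k I R = I * (f R * (1 - I - R) - k)"

definition dR :: "real \<Rightarrow> real \<Rightarrow> real \<Rightarrow> real" where
  "dR k I R = (k - 1) * I - R"

definition is_equilibrium :: "(real \<Rightarrow> real) \<Rightarrow> real \<Rightarrow> real \<Rightarrow> real \<Rightarrow> bool" where
  "is_equilibrium f k I R \<longleftrightarrow> dI f k I R = 0 \<and> dR k I R = 0"

definition endemic_equilibrium :: "(real \<Rightarrow> real) \<Rightarrow> real \<Rightarrow> real \<Rightarrow> real \<Rightarrow> bool" where
  "endemic_equilibrium f k I R \<longleftrightarrow> is_equilibrium f k I R \<and> I > 0"

end

theory Submission
  imports Defs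
begin

theorem theorem1:
  fixes f :: "real \<Rightarrow> real" and k I R :: real
  assumes "k > 1"
    and "\<forall>x. f x > 0"
    and "f differentiable_on {0..1}"
  shows "endemic_equilibrium f k I R \<longleftrightarrow>
           R \<in> {0<..<(k - 1) / k} \<and> I \<in> {0<..<1 / k} \<and>
           I = R / (k - 1) \<and> f R = g_fun k R"
proof
  assume h: "endemic_equilibrium f k I R"
  have I0: "I > 0" and e1: "I * (f R * (1 - I - R) - k) = 0" and e2: "(k - 1) * I - R = 0"
    using h by (auto simp: endemic_equilibrium_def is_equilibrium_def dI_def dR_def)
  have fp: "f R > 0" using assms(2) by auto
  have R: "R = (k-1)*I" using e2 by simp
  have e1': "f R * (1 - I - R) - k = 0" using e1 I0 by simp
  have "1 - I - R = 1 - k*I" using R by (simp add: algebra_simps)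
  hence e3: "f R * (1 - k*I) = k" using e1' by (metis eq_iff_diff_eq_0)
  have pos: "1 - k*I > 0"
  proof (rule ccontr)
    assume "\<not> ?thesis"
    hence "f R * (1 - k*I) \<le> 0" using fp by (simp add: mult_nonneg_nonpos)
    thus False using e3 assms(1) by simp
  qed
  have Ik: "I < 1/k" using pos assms(1) by (simp add: field_simps)
  have R0: "R > 0" using R I0 assms(1) by simp
  have kI: "k*I < 1" using Ik assms(1) by (simp add: field_simps)
  have "(k-1)*(k*I) < (k-1)*1" using kI assms(1) by (intro mult_strict_left_mono) auto
  moreover have "R*k = (k-1)*(k*I)" unfolding R by (simp add: algebra_simps)
  ultimately have "R*k < k-1" by (metis mult.right_neutral)
  hence Rk: "R < (k-1)/k" using assms(1) by (simp add: field_simps)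
  have IR: "I = R/(k-1)" using R assms(1) by simp
  have "(k-1)/k - R = (k-1)*(1-k*I)/k" unfolding R using assms(1) by (simp add: field_simps)
  hence "g_fun k R = k/(1-k*I)" unfolding g_fun_def using assms(1) pos by simp
  also have "\<dots> = f R" using e3 pos by (simp add: field_simps)
  finally show "R \<in> {0<..<(k - 1) / k} \<and> I \<in> {0<..<1 / k} \<and>
           I = R / (k - 1) \<and> f R = g_fun k R" using R0 Rk I0 Ik IR by simp
next
  assume h: "R \<in> {0<..<(k - 1) / k} \<and> I \<in> {0<..<1 / k} \<and>
           I = R / (k - 1) \<and> f R = g_fun k R"
  hence I0: "I > 0" and Ik: "I < 1/k" and IR: "I = R/(k-1)" and fg: "f R = g_fun k R" by auto
  have R: "R = (k-1)*I" using IR assms(1) by simp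
  have pos: "1 - k*I > 0" using Ik assms(1) by (simp add: field_simps)
  have "(k-1)/k - R = (k-1)*(1-k*I)/k" unfolding R using assms(1) by (simp add: field_simps)
  hence "g_fun k R = k/(1-k*I)" unfolding g_fun_def using assms(1) pos by simp
  hence "f R * (1 - k*I) = k" using fg pos by simp
  moreover have "1 - I - R = 1 - k*I" unfolding R by (simp add: algebra_simps)
  ultimately have "f R * (1 - I - R) - k = 0" by (metis diff_self)
  moreover have "(k - 1) * I - R = 0" using R by simp
  ultimately show "endemic_equilibrium f k I R" using I0
    by (simp add: endemic_equilibrium_def is_equilibrium_def dI_def dR_def)
qed

end
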